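(* Let $K\subset\mathbb{R}$ be a compact set with $\mathrm{conv}(K)=[a,b]$, and suppose there exists $\varepsilon>0$ such that $[a,a+\varepsilon]\subset K$ or $[b-\varepsilon,b]\subset K$. Then there exists an index $\ell\in\mathbb{N}$, depending only on $\varepsilon$ and $b-a$, such that \[M_o^{\ell}K=M_o^{\ell+k}K\quad\text{for every }k\in\mathbb{N}.\] Moreover, $\ell$ increases with $b-a$ and decreases as $\varepsilon$ increases.
   Context: For $K\subset\mathbb{R}$, the central Minkowski symmetrization is $M_oK=\frac{K-K}{2}=\{\frac{x-y}{2}:x,y\in K\}$, and $M_o^\ell$ denotes $M_o$ applied $\ell$ times. $\mathrm{conv}$ denotes convex hull. *)

theory Defs
  imports "HOL-Analysis.Analysis"
begin

definition Mo :: "real set \<Rightarrow> real set" where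
  "Mo K = {(x - y) / 2 | x y. x \<in> K \<and> y \<in> K}"

end

theory Submission
  imports Defs
begin

lemma Mo_sub: "S \<subseteq> {-c..c} \<Longrightarrow> Mo S \<subseteq> {-c..(c::real)}"
proof
  fix x assume S: "S \<subseteq> {-c..c}" and "x \<in> Mo S"
  then obtain u v where "x = (u - v)/2" "u \<in> S" "v \<in> S" unfolding Mo_def by blast
  moreover have "u \<in> {-c..c}" "v \<in> {-c..c}" using S calculation by auto
  ultimately show "x \<in> {-c..c}" by auto
qed

lemma Mo_sym: "x \<in> Mo S \<Longrightarrow> -x \<in> Mo S"
  proof -
  assume "x \<in> Mo S"
  then obtain u v where "x = (u - v)/2" "u \<in> S" "v \<in> S" unfolding Mo_def by blast
  then have "-x = (v - u)/2 \<and> v \<in> S \<and> u \<in> S" by simp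
  then show ?thesis unfolding Mo_def by blast
qed

lemma Mo_interval: "(0::real) \<le> c \<Longrightarrow> Mo {-c..c} = {-c..c}"
proof
  show "Mo {-c..c} \<subseteq> {-c..c}" by (rule Mo_sub) simp
  show "{-c..c} \<subseteq> Mo {-c..c}"
  proof
    fix x assume "x \<in> {-c..c}"
    then have "x = (x - (-x))/2 \<and> x \<in> {-c..c} \<and> -x \<in> {-c..c}" by auto
    then show "x \<in> Mo {-c..c}" unfolding Mo_def by blast
  qed
qed

lemma Mo_iter_interval: "(0::real) \<le> c \<Longrightarrow> (Mo ^^ k) {-c..c} = {-c..c}"
  by (induction k) (auto simp: Mo_interval)

lemma Mo_iter_sub: "S \<subseteq> {-c..c} \<Longrightarrow> (Mo ^^ k) S \<subseteq> {-c..(c::real)}"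
  by (induction k) (auto intro: Mo_sub[THEN subsetD])

definition P :: "real \<Rightarrow> real \<Rightarrow> nat \<Rightarrow> real set \<Rightarrow> bool" where
  "P c r n S = ((\<forall>x\<in>S. -x \<in> S) \<and>
     (\<forall>k t. k \<le> (2::nat)^n \<and> 0 \<le> t \<and> t \<le> r \<longrightarrow> real k * c / 2^n - t \<in> S))"

lemma P_step:
  assumes "P c r n S"
  shows "P c r (Suc n) (Mo S)"
  unfolding P_def
proof (intro conjI allI impI ballI)
  fix x assume "x \<in> Mo S" then show "-x \<in> Mo S" by (rule Mo_sym)
next
  fix k t assume h: "k \<le> (2::nat) ^ Suc n \<and> 0 \<le> t \<and> t \<le> r"
  define k1 where "k1 = (k + 1) div 2"
  define k2 where "k2 = k div 2"
  have k12: "k1 + k2 = k" "k1 \<le> 2^n" "k2 \<le> 2^n" using h unfolding k1_def k2_def by auto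
  have y: "real k1 * c / 2^n - t \<in> S" using assms h k12 unfolding P_def by blast
  have z: "real k2 * c / 2^n - t \<in> S" using assms h k12 unfolding P_def by blast
  then have z': "-(real k2 * c / 2^n - t) \<in> S" using assms unfolding P_def by blast
  have "real k * c / 2 ^ Suc n - t = ((real k1 * c / 2^n - t) - (-(real k2 * c / 2^n - t)))/2"
    proof -
    have "real k = real k1 + real k2" using k12(1) by simp
    then show ?thesis by (simp add: field_simps)
  qed
  then show "real k * c / 2 ^ Suc n - t \<in> Mo S" using y z' unfolding Mo_def by blast
qed

lemma P_iter: "P c r 0 S \<Longrightarrow> P c r n ((Mo ^^ n) S)"
  by (induction n) (auto intro: P_step)

lemma P_cover:
  assumes "P c r n S" "S \<subseteq> {-c..c}" "0 < c" "c \<le> 2^n * r"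
  shows "S = {-c..c}"
proof
  show "S \<subseteq> {-c..c}" by fact
  have pos: "x \<in> S" if x: "0 \<le> x" "x \<le> c" for x
  proof -
    define k where "k = nat \<lceil>2^n * x / c\<rceil>"
    have k1: "real k = of_int \<lceil>2^n * x / c\<rceil>" unfolding k_def using x assms(3) by simp
    have "2^n * x / c \<le> 2^n" using x assms(3) by (simp add: field_simps)
    then have "\<lceil>2^n * x / c\<rceil> \<le> 2^n" by (metis ceiling_le_iff of_int_numeral of_int_power)
    then have kle: "k \<le> 2^n" unfolding k_def by (simp add: nat_le_iff)
    have a1: "2^n * x / c \<le> real k" using k1 by linarith
    have a2: "real k < 2^n * x / c + 1" using k1 by linarith
    have b1: "x \<le> real k * c / 2^n" using a1 assms(3) by (simp add: field_simps)
    have b2: "real k * c / 2^n < x + c / 2^n" using a2 assms(3) by (simp add: field_simps)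
    have "c / 2^n \<le> r" using assms(4) by (simp add: field_simps)
    then have "real k * c / 2 ^ n - (real k * c / 2 ^ n - x) \<in> S"
      using assms(1) kle b1 b2 unfolding P_def
    proof -
      have "0 \<le> real k * c / 2 ^ n - x" "real k * c / 2 ^ n - x \<le> r" using b1 b2 \<open>c / 2^n \<le> r\<close> by linarith+
      then show ?thesis using assms(1) kle unfolding P_def by blast
    qed
    then show ?thesis by simp
  qed
  show "{-c..c} \<subseteq> S"
  proof
    fix x assume x: "x \<in> {-c..c}"
    show "x \<in> S"
    proof (cases "0 \<le> x")
      case True then show ?thesis using x pos by auto
    next
      case False
      then have "-x \<in> S" using x pos by auto
      then show ?thesis using assms(1) unfolding P_def by force
    qed
  qed
qed

lemma main_case:
  assumes K: "compact K" "convex hull K = {a..b}" "0 < \<epsilon>"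
    and base: "{-\<epsilon>/2..0} \<subseteq> Mo K" "{(b-a)/2 - \<epsilon>/2..(b-a)/2} \<subseteq> Mo K"
    and le: "\<epsilon> \<le> b - a"
    and m: "(b - a) / \<epsilon> \<le> 2 ^ m"
  shows "(Mo ^^ (Suc m + k)) K = {-((b-a)/2)..(b-a)/2}"
proof -
  define c where "c = (b - a)/2"
  define r where "r = \<epsilon>/2"
  have c0: "0 < c" using le K(3) unfolding c_def by simp
  have sub: "K \<subseteq> {a..b}" using hull_subset[of K convex] K(2) by simp
  have S1: "Mo K \<subseteq> {-c..c}"
  proof
    fix x assume "x \<in> Mo K"
    then obtain u v where "x = (u - v)/2" "u \<in> K" "v \<in> K" unfolding Mo_def by blast
    moreover have "u \<in> {a..b}" "v \<in> {a..b}" using sub calculation by auto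
    ultimately show "x \<in> {-c..c}" unfolding c_def by (auto simp: field_simps)
  qed
  have P0: "P c r 0 (Mo K)"
    unfolding P_def
  proof (intro conjI allI impI ballI)
    fix x assume "x \<in> Mo K" then show "-x \<in> Mo K" by (rule Mo_sym)
  next
    fix k t assume h: "k \<le> (2::nat) ^ 0 \<and> 0 \<le> t \<and> t \<le> r"
    then have "k = 0 \<or> k = 1" by auto
    then show "real k * c / 2 ^ 0 - t \<in> Mo K"
    proof
      assume "k = 0" then show ?thesis using h base(1) unfolding r_def by auto
    next
      assume "k = 1"
      have "(b-a)/2 - t \<in> {(b-a)/2 - \<epsilon>/2..(b-a)/2}" using h unfolding r_def by (auto simp: field_simps)
      then show ?thesis using \<open>k = 1\<close> base(2) unfolding c_def by auto
    qed
  qed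
  have Pm: "P c r m ((Mo ^^ m) (Mo K))" using P_iter[OF P0] .
  have "c \<le> 2^m * r" using m K(3) unfolding c_def r_def by (simp add: field_simps)
  then have eq: "(Mo ^^ m) (Mo K) = {-c..c}" using P_cover[OF Pm Mo_iter_sub[OF S1] c0] by simp
  have "(Mo ^^ (Suc m + k)) K = (Mo ^^ k) ((Mo ^^ m) (Mo K))"
    by (simp add: funpow_add funpow_Suc_right add.commute[of m k] del: funpow.simps)
  also have "\<dots> = {-c..c}" using eq Mo_iter_interval c0 by simp
  finally show ?thesis unfolding c_def .
qed

lemma endpoints:
  assumes "compact K" "convex hull K = {a..b}" "a \<le> (b::real)"
  shows "a \<in> K" "b \<in> K"
proof -
  have ne: "K \<noteq> {}" using assms(2,3) by auto
  have sub: "K \<subseteq> {a..b}" using hull_subset[of K convex] assms(2) by simp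
  have bd: "bdd_above K" "bdd_below K" using compact_imp_bounded[OF assms(1)]
    by (auto intro: bounded_imp_bdd_above bounded_imp_bdd_below)
  have cl: "closed K" using assms(1) compact_imp_closed by blast
  have S: "Sup K \<in> K" using closed_contains_Sup[OF ne bd(1) cl] .
  have I: "Inf K \<in> K" using closed_contains_Inf[OF ne bd(2) cl] .
  have "K \<subseteq> {..Sup K}" using bd(1) by (auto intro: cSup_upper)
  then have "convex hull K \<subseteq> {..Sup K}" by (intro hull_minimal) auto
  then have "b \<le> Sup K" using assms by auto
  moreover have "Sup K \<le> b" using S sub by auto
  ultimately show "b \<in> K" using S by simp
  have "K \<subseteq> {Inf K..}" using bd(2) by (auto intro: cInf_lower)
  then have "convex hull K \<subseteq> {Inf K..}" by (intro hull_minimal) auto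
  then have "Inf K \<le> a" using assms by auto
  moreover have "a \<le> Inf K" using I sub by auto
  ultimately show "a \<in> K" using I by simp
qed

theorem lemma13:
  "\<exists>L :: real \<Rightarrow> real \<Rightarrow> nat.
     (\<forall>K a b \<epsilon>. compact K \<and> convex hull K = {a..b} \<and> \<epsilon> > 0 \<and>
        ({a..a+\<epsilon>} \<subseteq> K \<or> {b-\<epsilon>..b} \<subseteq> K) \<longrightarrow>
        (\<forall>k::nat. (Mo ^^ (L \<epsilon> (b - a))) K = (Mo ^^ (L \<epsilon> (b - a) + k)) K)) \<and>
     (\<forall>\<epsilon> \<epsilon>' d d'. 0 < \<epsilon> \<and> \<epsilon> \<le> \<epsilon>' \<and> 0 < d' \<and> d' \<le> d \<longrightarrow>
        L \<epsilon>' d' \<le> L \<epsilon> d)"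
proof -
  define L where "L = (\<lambda>(e::real) (d::real). Suc (LEAST n::nat. d / e \<le> 2 ^ n))"
  show ?thesis
  proof (intro exI[of _ L] conjI allI impI)
  have ex: "\<exists>n::nat. x \<le> 2 ^ n" for x :: real
    using real_arch_pow[of 2 x] by (auto intro: less_imp_le)
  show "L e' d' \<le> L e d" if h: "0 < e \<and> e \<le> e' \<and> 0 < d' \<and> d' \<le> d" for e e' d d' :: real
  proof -
    have "d' / e' \<le> d / e" using h by (meson divide_mono less_le_trans less_imp_le)
    moreover have "d / e \<le> 2 ^ (LEAST n::nat. d / e \<le> 2 ^ n)" by (rule LeastI_ex[OF ex])
    ultimately have "d' / e' \<le> 2 ^ (LEAST n::nat. d / e \<le> 2 ^ n)" by linarith
    then have "(LEAST n::nat. d' / e' \<le> 2 ^ n) \<le> (LEAST n::nat. d / e \<le> 2 ^ n)" by (rule Least_le)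
    then show ?thesis unfolding L_def by simp
  qed
  fix K :: "real set" and a b \<epsilon> :: real and k :: nat
  assume h: "compact K \<and> convex hull K = {a..b} \<and> \<epsilon> > 0 \<and> ({a..a+\<epsilon>} \<subseteq> K \<or> {b-\<epsilon>..b} \<subseteq> K)"
  define m where "m = (LEAST n::nat. (b - a) / \<epsilon> \<le> 2 ^ n)"
  have m: "(b - a) / \<epsilon> \<le> 2 ^ m" unfolding m_def by (rule LeastI_ex[OF ex])
  have Ldef: "L \<epsilon> (b - a) = Suc m" unfolding L_def m_def by simp
  have sub: "K \<subseteq> {a..b}" using hull_subset[of K convex] h by simp
  have le: "\<epsilon> \<le> b - a"
  proof (cases "{a..a+\<epsilon>} \<subseteq> K")
    case True
    have "a + \<epsilon> \<in> {a..a+\<epsilon>}" using h by auto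
    then have "a + \<epsilon> \<in> {a..b}" using True sub by blast
    then show ?thesis by auto
  next
    case False
    then have F: "{b-\<epsilon>..b} \<subseteq> K" using h by blast
    have "b - \<epsilon> \<in> {b-\<epsilon>..b}" using h by auto
    then have "b - \<epsilon> \<in> {a..b}" using F sub by blast
    then show ?thesis by auto
  qed
  have aK: "a \<in> K" and bK: "b \<in> K" using endpoints[of K a b] h le by auto
  have base: "{-\<epsilon>/2..0} \<subseteq> Mo K \<and> {(b-a)/2 - \<epsilon>/2..(b-a)/2} \<subseteq> Mo K"
  proof (cases "{a..a+\<epsilon>} \<subseteq> K")
    case True
    have 1: "x \<in> Mo K" if "x \<in> {-\<epsilon>/2..0}" for x
    proof -
      have "a - 2*x \<in> K" using True that by (auto simp: subset_iff)
      moreover have "x = (a - (a - 2*x))/2" by simp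
      ultimately show ?thesis using aK unfolding Mo_def by blast
    qed
    have 2: "x \<in> Mo K" if "x \<in> {(b-a)/2 - \<epsilon>/2..(b-a)/2}" for x
    proof -
      have "b - 2*x \<in> {a..a+\<epsilon>}" using that by (auto simp: field_simps)
      then have "b - 2*x \<in> K" using True by blast
      moreover have "x = (b - (b - 2*x))/2" by simp
      ultimately show ?thesis using bK unfolding Mo_def by blast
    qed
    show ?thesis using 1 2 by blast
  next
    case False
    then have F: "{b-\<epsilon>..b} \<subseteq> K" using h by blast
    have 1: "x \<in> Mo K" if "x \<in> {-\<epsilon>/2..0}" for x
    proof -
      have "b + 2*x \<in> {b-\<epsilon>..b}" using that by (auto simp: field_simps)
      then have "b + 2*x \<in> K" using F by blast
      moreover have "x = ((b + 2*x) - b)/2" by simp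
      ultimately show ?thesis using bK unfolding Mo_def by blast
    qed
    have 2: "x \<in> Mo K" if "x \<in> {(b-a)/2 - \<epsilon>/2..(b-a)/2}" for x
    proof -
      have "a + 2*x \<in> {b-\<epsilon>..b}" using that by (auto simp: field_simps)
      then have "a + 2*x \<in> K" using F by blast
      moreover have "x = ((a + 2*x) - a)/2" by simp
      ultimately show ?thesis using aK unfolding Mo_def by blast
    qed
    show ?thesis using 1 2 by blast
  qed
  have A: "(Mo ^^ (Suc m + k)) K = {-((b-a)/2)..(b-a)/2}"
    using main_case[of K a b \<epsilon> m k] h base le m by blast
  have B: "(Mo ^^ (Suc m + 0)) K = {-((b-a)/2)..(b-a)/2}"
    using main_case[of K a b \<epsilon> m 0] h base le m by blast
  show "(Mo ^^ (L \<epsilon> (b - a))) K = (Mo ^^ (L \<epsilon> (b - a) + k)) K"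
    unfolding Ldef using A B by simp
  qed
qed

end
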